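(* Let $(F_r)_{r\in\mathbb Z}$ be the Fibonacci numbers and $(\mathcal F_r)_{r\in\mathbb Z}$ any generalized Fibonacci sequence. Then for all integers $r,s$ and every non-negative integer $k$: \[ F_s\sum_{j=0}^kF_{s+1}^{k-j}\mathcal F_{r-1+sj}=\mathcal F_{r+s(k+1)}-F_{s+1}^{k+1}\mathcal F_r, \] \[ \sum_{j=0}^k(-1)^jF_s^{k-j}F_{s+1}^j\mathcal F_{r-k+s+j}=(-1)^kF_{s+1}^{k+1}\mathcal F_r+F_s^{k+1}\mathcal F_{r-k-1}, \] \[ F_s\sum_{j=0}^kF_{s-1}^{k-j}\mathcal F_{r-sk-s+1+sj}=\mathcal F_r-F_{s-1}^{k+1}\mathcal F_{r-(k+1)s}. \]
   Context: A generalized Fibonacci sequence is a two-sided sequence $(\mathcal F_r)_{r\in\mathbb Z}$ of complex numbers with $\mathcal F_r=\mathcal F_{r-1}+\mathcal F_{r-2}$ for all $r\in\mathbb Z$. The Fibonacci numbers $F_r$ are the one with $F_0=0$, $F_1=1$ (extended to negative indices by the recurrence). The convention $0^0=1$ is used. *)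

theory Defs
  imports Complex_Main "HOL-Number_Theory.Fib"
begin

definition gen_fib :: "(int \<Rightarrow> complex) \<Rightarrow> bool" where
  "gen_fib G \<longleftrightarrow> (\<forall>r::int. G r = G (r - 1) + G (r - 2))"

text \<open>Two-sided Fibonacci numbers: F_0 = 0, F_1 = 1, extended to negative indices
  by the recurrence, which gives F_(-n) = (-1)^(n+1) F_n.\<close>
definition fibZ :: "int \<Rightarrow> int" where
  "fibZ r = (if r \<ge> 0 then int (fib (nat r)) else (-1) ^ (nat (-r) + 1) * int (fib (nat (-r))))"

end

theory Submission
  imports Defs
begin

lemma fibZ_rec: "fibZ r = fibZ (r - 1) + fibZ (r - 2)"
proof -
  consider "r \<ge> 2" | "r = 1" | "r = 0" | "r \<le> -1" by linarith
  then show ?thesis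
  proof cases
    case 1
    define n where "n = nat (r - 2)"
    then have n: "r = int n + 2" using 1 by simp
    have "nat r = Suc (Suc n)" "nat (r-1) = Suc n" "nat (r-2) = n" using n by auto
    then show ?thesis using 1 by (simp add: fibZ_def)
  next
    case 2 then show ?thesis by (simp add: fibZ_def)
  next
    case 3 then show ?thesis by (simp add: fibZ_def numeral_2_eq_2)
  next
    case 4
    define n where "n = nat (- r - 1)"
    then have n: "r = - int n - 1" using 4 by simp
    have a: "nat (-r) = Suc n" "nat (-(r-1)) = Suc (Suc n)" "nat (-(r-2)) = Suc (Suc (Suc n))" using n by auto
    define p :: int where "p = (-1)^n"
    have pp: "(-1::int)^(Suc n+1) = p" "(-1::int)^(Suc (Suc n)+1) = -p" "(-1::int)^(Suc (Suc (Suc n))+1) = p"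
      by (simp_all add: p_def)
    have f: "fib (Suc (Suc (Suc n))) = fib (Suc (Suc n)) + fib (Suc n)" "fib (Suc (Suc n)) = fib (Suc n) + fib n"
      by (simp_all only: fib.simps)
    have "fibZ r = p * int (fib (Suc n))" using 4 a pp by (simp only: fibZ_def) simp
    moreover have "fibZ (r-1) = - p * int (fib (Suc (Suc n)))" using 4 a pp by (simp only: fibZ_def) simp
    moreover have "fibZ (r-2) = p * int (fib (Suc (Suc (Suc n))))" using 4 a pp by (simp only: fibZ_def) simp
    ultimately show ?thesis unfolding f by (simp add: algebra_simps)
  qed
qed

lemma gen_add:
  assumes "gen_fib G"
  shows "G (n + m) = of_int (fibZ m) * G (n + 1) + of_int (fibZ (m - 1)) * G n"
proof -
  have rec: "\<And>x. G x = G (x - 1) + G (x - 2)" using assms unfolding gen_fib_def by blast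
  have fr: "\<And>x. (of_int (fibZ x)::complex) = of_int (fibZ (x-1)) + of_int (fibZ (x-2))"
    by (metis fibZ_rec of_int_add)
  let ?P = "\<lambda>m. G (n + m) = of_int (fibZ m) * G (n + 1) + of_int (fibZ (m - 1)) * G n"
  have "?P m \<and> ?P (m+1)"
  proof (induction m rule: int_induct[where k=0])
    case base
    then show ?case by (simp add: fibZ_def)
  next
    case (step1 i)
    have "G (n + (i+2)) = G (n+(i+1)) + G (n+i)" using rec[of "n+(i+2)"] by (simp add: algebra_simps)
    moreover have "(of_int (fibZ (i+2))::complex) = of_int (fibZ (i+1)) + of_int (fibZ i)" using fr[of "i+2"] by (simp add: add.commute)
    moreover have "(of_int (fibZ (i+1))::complex) = of_int (fibZ i) + of_int (fibZ (i-1))" using fr[of "i+1"] by simp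
    ultimately show ?case using step1 by (simp add: algebra_simps)
  next
    case (step2 i)
    define f0 :: complex where "f0 = of_int (fibZ (i-2))"
    define f1 :: complex where "f1 = of_int (fibZ (i-1))"
    have fi: "of_int (fibZ i) = f1 + f0" using fr[of i] by (simp add: f0_def f1_def)
    have fi1: "of_int (fibZ (i+1)) = f1 + f1 + f0" using fr[of "i+1"] fi by (simp add: f1_def)
    have h1: "G (n + (i-1)) = G (n+(i+1)) - G (n+i)" using rec[of "n+(i+1)"] by (simp add: algebra_simps)
    have ih: "G (n+i) = (f1+f0) * G (n+1) + f1 * G n" "G (n+(i+1)) = (f1+f1+f0) * G (n+1) + (f1+f0) * G n"
      using step2(2) fi fi1 by (simp_all add: f1_def)
    have "G (n + (i-1)) = f1 * G (n + 1) + f0 * G n"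
      unfolding h1 ih by (simp add: algebra_simps)
    then show ?case using step2(2) by (simp add: f0_def f1_def)
  qed
  then show ?thesis by blast
qed


lemma tele: "(\<Sum>j=0..k. f j) = W (Suc k) - W 0" if "\<And>j. j \<le> k \<Longrightarrow> f j = W (Suc j) - W j"
  for f W :: "nat \<Rightarrow> complex"
  using that by (simp add: sum_Suc_diff)

theorem mainTheorem6:
  fixes G :: "int \<Rightarrow> complex" and r s :: int and k :: nat
  assumes "gen_fib G"
  shows "(of_int (fibZ s) * (\<Sum>j=0..k. of_int (fibZ (s + 1)) ^ (k - j) * G (r - 1 + s * int j))
           = G (r + s * (int k + 1)) - of_int (fibZ (s + 1)) ^ (k + 1) * G r) \<and>
         ((\<Sum>j=0..k. (-1) ^ j * of_int (fibZ s) ^ (k - j) * of_int (fibZ (s + 1)) ^ j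
              * G (r - int k + s + int j))
           = (-1) ^ k * of_int (fibZ (s + 1)) ^ (k + 1) * G r + of_int (fibZ s) ^ (k + 1) * G (r - int k - 1)) \<and>
         (of_int (fibZ s) * (\<Sum>j=0..k. of_int (fibZ (s - 1)) ^ (k - j) * G (r - s * int k - s + 1 + s * int j))
           = G r - of_int (fibZ (s - 1)) ^ (k + 1) * G (r - (int k + 1) * s))"
proof -
  define a :: complex where "a = of_int (fibZ (s + 1))"
  define b :: complex where "b = of_int (fibZ s)"
  define c :: complex where "c = of_int (fibZ (s - 1))"
  have A: "G (x + s) = a * G x + b * G (x - 1)" for x
    using gen_add[OF assms, of "x - 1" "s + 1"] by (simp add: a_def b_def)
  have C: "G (x + s) = b * G (x + 1) + c * G x" for x
    using gen_add[OF assms, of x s] by (simp add: b_def c_def)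
  have p1: "b * (\<Sum>j=0..k. a ^ (k - j) * G (r - 1 + s * int j))
           = G (r + s * (int k + 1)) - a ^ (k + 1) * G r"
  proof -
    define W where "W j = a ^ (k + 1 - j) * G (r + s * int j)" for j
    have "(\<Sum>j=0..k. b * (a ^ (k - j) * G (r - 1 + s * int j))) = W (Suc k) - W 0"
    proof (rule tele)
      fix j assume j: "j \<le> k"
      have e1: "k + 1 - j = Suc (k - j)" "k + 1 - Suc j = k - j" using j by auto
      have "G (r + s * int (Suc j)) = a * G (r + s * int j) + b * G (r - 1 + s * int j)"
        using A[of "r + s * int j"] by (simp add: algebra_simps)
      then show "b * (a ^ (k - j) * G (r - 1 + s * int j)) = W (Suc j) - W j"
        unfolding W_def e1 by (simp add: algebra_simps)
    qed
    then show ?thesis by (simp add: W_def sum_distrib_left algebra_simps)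
  qed
  have p2: "(\<Sum>j=0..k. (-1) ^ j * b ^ (k - j) * a ^ j * G (r - int k + s + int j))
           = (-1) ^ k * a ^ (k + 1) * G r + b ^ (k + 1) * G (r - int k - 1)"
  proof -
    define U where "U j = - ((-1) ^ j * b ^ (k + 1 - j) * a ^ j * G (r - int k - 1 + int j))" for j
    have "(\<Sum>j=0..k. (-1) ^ j * b ^ (k - j) * a ^ j * G (r - int k + s + int j)) = U (Suc k) - U 0"
    proof (rule tele)
      fix j assume j: "j \<le> k"
      have e1: "k + 1 - j = Suc (k - j)" "k + 1 - Suc j = k - j" using j by auto
      have "G (r - int k + s + int j) = a * G (r - int k + int j) + b * G (r - int k - 1 + int j)"
        using A[of "r - int k + int j"] by (simp add: algebra_simps)
      then show "(-1) ^ j * b ^ (k - j) * a ^ j * G (r - int k + s + int j) = U (Suc j) - U j"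
        unfolding U_def e1 by (simp add: algebra_simps)
    qed
    then show ?thesis by (simp add: U_def algebra_simps)
  qed
  have p3: "b * (\<Sum>j=0..k. c ^ (k - j) * G (r - s * int k - s + 1 + s * int j))
           = G r - c ^ (k + 1) * G (r - (int k + 1) * s)"
  proof -
    define V where "V j = c ^ (k + 1 - j) * G (r - s * int k - s + s * int j)" for j
    have "(\<Sum>j=0..k. b * (c ^ (k - j) * G (r - s * int k - s + 1 + s * int j))) = V (Suc k) - V 0"
    proof (rule tele)
      fix j assume j: "j \<le> k"
      have e1: "k + 1 - j = Suc (k - j)" "k + 1 - Suc j = k - j" using j by auto
      have "G (r - s * int k - s + s * int (Suc j)) = b * G (r - s * int k - s + 1 + s * int j) + c * G (r - s * int k - s + s * int j)"
        using C[of "r - s * int k - s + s * int j"] by (simp add: algebra_simps)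
      then show "b * (c ^ (k - j) * G (r - s * int k - s + 1 + s * int j)) = V (Suc j) - V j"
        unfolding V_def e1 by (simp add: algebra_simps)
    qed
    moreover have "r - s * int k - s + s * int (Suc k) = r" by (simp add: algebra_simps)
    moreover have "r - s * int k - s + s * int 0 = r - (int k + 1) * s" by (simp add: algebra_simps)
    ultimately show ?thesis unfolding V_def sum_distrib_left by (simp only:) simp
  qed
  show ?thesis using p1 p2 p3 unfolding a_def b_def c_def by simp
qed

end
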